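(* Let $u$ be a smooth function on an open subset of $\mathbb{R}^n$ and let $m$ be a nonnegative integer. Then \[ \Delta\left[\left(\frac{1+|x|^2}{2}\right)^{m+1}\Delta^m u\right]+m(m+1)\left(\frac{1+|x|^2}{2}\right)^{m-1}\Delta^m u=\left(\frac{1+|x|^2}{2}\right)^{m}\Delta^{m+1}\left(\frac{1+|x|^2}{2}\,u\right). \]
   Context: $\Delta$ is the Euclidean Laplacian on $\mathbb{R}^n$. *)

theory Defs
  imports "HOL-Analysis.Analysis"
begin

definition partial :: "'n::finite \<Rightarrow> (real^'n \<Rightarrow> real) \<Rightarrow> real^'n \<Rightarrow> real" where
  "partial i f x = deriv (\<lambda>t. f (x + t *\<^sub>R axis i 1)) 0"

definition laplacian :: "(real^'n::finite \<Rightarrow> real) \<Rightarrow> real^'n \<Rightarrow> real" where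
  "laplacian f x = (\<Sum>i\<in>UNIV. partial i (partial i f) x)"

definition smooth_on :: "(real^'n::finite) set \<Rightarrow> (real^'n \<Rightarrow> real) \<Rightarrow> bool" where
  "smooth_on U f \<longleftrightarrow> (\<forall>is. foldr partial is f differentiable_on U)"

end

theory Submission imports Defs begin

lemma line_has_deriv:
  assumes "(f has_derivative f') (at (z + t0 *\<^sub>R v))"
  shows "((\<lambda>t. f (z + t *\<^sub>R v)) has_real_derivative f' v) (at t0)"
proof -
  have "((\<lambda>t. z + t *\<^sub>R v) has_derivative (\<lambda>s. s *\<^sub>R v)) (at t0)"
    by (auto intro!: derivative_eq_intros)
  from has_derivative_compose[OF this assms]
  have "((\<lambda>t. f (z + t *\<^sub>R v)) has_derivative (\<lambda>s. f' (s *\<^sub>R v))) (at t0)" .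
  moreover have "bounded_linear f'" using assms has_derivative_bounded_linear by blast
  ultimately show ?thesis
    by (intro has_derivative_imp_has_field_derivative)
       (auto simp: linear_cmul[OF bounded_linear.linear[OF \<open>bounded_linear f'\<close>]])
qed

lemma partial_eq:
  assumes "(f has_derivative f') (at z)"
  shows "partial i f z = f' (axis i 1)"
proof -
  have "((\<lambda>t. f (z + t *\<^sub>R axis i 1)) has_real_derivative f' (axis i 1)) (at 0)"
    by (rule line_has_deriv) (use assms in simp)
  then show ?thesis unfolding partial_def by (rule DERIV_imp_deriv)
qed

lemma partial_line:
  assumes "f differentiable at (z + t0 *\<^sub>R axis i 1)"
  shows "((\<lambda>t. f (z + t *\<^sub>R axis i 1)) has_real_derivative partial i f (z + t0 *\<^sub>R axis i 1)) (at t0)"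
proof -
  obtain f' where f': "(f has_derivative f') (at (z + t0 *\<^sub>R axis i 1))"
    using assms unfolding differentiable_def by blast
  show ?thesis using line_has_deriv[OF f'] partial_eq[OF f'] by simp
qed

lemma partial_local:
  assumes "open U" "z \<in> U" "\<And>y. y \<in> U \<Longrightarrow> f y = g y"
  shows "partial i f z = partial i g z"
  unfolding partial_def
proof (rule deriv_cong_ev[OF _ refl])
  let ?S = "(\<lambda>t::real. z + t *\<^sub>R axis i 1) -` U"
  have "open ?S"
    by (rule open_vimage[OF assms(1)]) (auto intro!: continuous_intros)
  moreover have "0 \<in> ?S" using assms(2) by simp
  ultimately show "\<forall>\<^sub>F t in nhds 0. f (z + t *\<^sub>R axis i 1) = g (z + t *\<^sub>R axis i 1)"
    unfolding eventually_nhds using assms(3) by blast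
qed

lemma partial_add:
  assumes "f differentiable at y" "g differentiable at y"
  shows "partial i (\<lambda>z. f z + g z) y = partial i f y + partial i g y"
proof -
  obtain f' g' where f': "(f has_derivative f') (at y)" and g': "(g has_derivative g') (at y)"
    using assms unfolding differentiable_def by blast
  show ?thesis using partial_eq[OF has_derivative_add[OF f' g']] partial_eq[OF f'] partial_eq[OF g'] by simp
qed

lemma partial_mult:
  assumes "f differentiable at y" "g differentiable at y"
  shows "partial i (\<lambda>z. f z * g z) y = partial i f y * g y + f y * partial i g y"
proof -
  obtain f' g' where f': "(f has_derivative f') (at y)" and g': "(g has_derivative g') (at y)"
    using assms unfolding differentiable_def by blast
  show ?thesis using partial_eq[OF has_derivative_mult[OF f' g']] partial_eq[OF f'] partial_eq[OF g'] by simp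
qed

lemma partial_cmult:
  assumes "f differentiable at y"
  shows "partial i (\<lambda>z. c * f z) y = c * partial i f y"
proof -
  obtain f' where f': "(f has_derivative f') (at y)"
    using assms unfolding differentiable_def by blast
  show ?thesis using partial_eq[OF has_derivative_mult[OF has_derivative_const f']] partial_eq[OF f'] by simp
qed

lemma partial_sum:
  assumes "finite S" "\<And>j. j \<in> S \<Longrightarrow> F j differentiable at y"
  shows "partial i (\<lambda>z. \<Sum>j\<in>S. F j z) y = (\<Sum>j\<in>S. partial i (F j) y)"
  using assms
proof (induction S rule: finite_induct)
  case empty
  then show ?case using partial_eq[OF has_derivative_const[of 0]] by simp
next
  case (insert a S)
  have "partial i (\<lambda>z. \<Sum>j\<in>insert a S. F j z) y = partial i (\<lambda>z. F a z + (\<Sum>j\<in>S. F j z)) y"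
    using insert by simp
  also have "\<dots> = partial i (F a) y + partial i (\<lambda>z. \<Sum>j\<in>S. F j z) y"
    by (rule partial_add) (use insert in \<open>auto intro!: differentiable_sum\<close>)
  finally show ?case using insert by simp
qed

lemma partial_const_fun: "partial i (\<lambda>z. c) = (\<lambda>z. 0)"
  using partial_eq[OF has_derivative_const] by (auto simp: fun_eq_iff)

lemma partial_coord_fun: "partial i (\<lambda>z::real^'n::finite. z $ j) = (\<lambda>z. if j = i then 1 else 0)"
proof -
  have "((\<lambda>z::real^'n. z $ j) has_derivative (\<lambda>z. z $ j)) (at y)" for y
    by (rule bounded_linear_imp_has_derivative) auto
  then show ?thesis using partial_eq by (fastforce simp: fun_eq_iff axis_def)
qed

fun smn :: "(real^'n::finite) set \<Rightarrow> nat \<Rightarrow> (real^'n \<Rightarrow> real) \<Rightarrow> bool" where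
  "smn U 0 f = (f differentiable_on U)"
| "smn U (Suc n) f = (f differentiable_on U \<and> (\<forall>j. smn U n (partial j f)))"

lemma smn_foldr:
  fixes f :: "real^'n::finite \<Rightarrow> real"
  shows "smn U n f \<longleftrightarrow> (\<forall>is. length is \<le> n \<longrightarrow> foldr partial is f differentiable_on U)"
proof (induction n arbitrary: f)
  case 0
  then show ?case by auto
next
  case (Suc n)
  show ?case
  proof
    assume "smn U (Suc n) f"
    then have d: "f differentiable_on U" and p: "\<And>j. smn U n (partial j f)" by auto
    show "\<forall>is. length is \<le> Suc n \<longrightarrow> foldr partial is f differentiable_on U"
    proof (intro allI impI)
      fix "is" :: "'n list" assume l: "length is \<le> Suc n"
      show "foldr partial is f differentiable_on U"
      proof (cases "is" rule: rev_cases)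
        case Nil then show ?thesis using d by simp
      next
        case (snoc ys j)
        then show ?thesis using p[of j] Suc.IH[of "partial j f"] l by auto
      qed
    qed
  next
    assume a: "\<forall>is. length is \<le> Suc n \<longrightarrow> foldr partial is f differentiable_on U"
    have "f differentiable_on U" using a[rule_format, of "[]"] by simp
    moreover have "smn U n (partial j f)" for j
      unfolding Suc.IH
    proof (intro allI impI)
      fix "is" :: "'n list" assume "length is \<le> n"
      then show "foldr partial is (partial j f) differentiable_on U"
        using a[rule_format, of "is @ [j]"] by simp
    qed
    ultimately show "smn U (Suc n) f" by simp
  qed
qed

lemma smooth_smn: "smooth_on U f \<longleftrightarrow> (\<forall>n. smn U n f)"
  unfolding smooth_on_def smn_foldr by (metis le_refl)

lemma smn_diff_on: "smn U n f \<Longrightarrow> f differentiable_on U"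
  by (cases n) auto

lemma smn_mono: "smn U (Suc n) f \<Longrightarrow> smn U n f"
  unfolding smn_foldr by auto

lemma smn_const: "smn U n (\<lambda>z. c)"
  by (induction n arbitrary: c) (auto simp: partial_const_fun)

lemma smn_coord: "smn U n (\<lambda>z. z $ j)"
proof -
  have d: "(\<lambda>z. z$j) differentiable_on U"
    by (rule bounded_linear_imp_differentiable_on) (rule bounded_linear_vec_nth)
  show ?thesis
proof (cases n)
  case 0 then show ?thesis using bounded_linear_imp_differentiable_on bounded_linear_vec_nth by auto
next
  case (Suc k)
  have "partial i (\<lambda>z::real^_. z $ j) = (\<lambda>z. (if j = i then 1 else 0))" for i
    by (rule partial_coord_fun)
  then show ?thesis using Suc smn_const d by auto
qed
qed

context
  fixes U :: "(real^'n::finite) set"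
  assumes opn: "open U"
begin

lemma diff_on_at: "f differentiable_on U \<Longrightarrow> y \<in> U \<Longrightarrow> f differentiable at y"
  using differentiable_on_eq_differentiable_at[OF opn] by blast

lemma diff_on_cong: "(\<And>y. y \<in> U \<Longrightarrow> f y = g y) \<Longrightarrow> f differentiable_on U \<Longrightarrow> g differentiable_on U"
  unfolding differentiable_on_eq_differentiable_at[OF opn] differentiable_def
  using has_derivative_transform_within_open[OF _ opn] by metis

lemma smn_cong: "(\<And>y. y \<in> U \<Longrightarrow> f y = g y) \<Longrightarrow> smn U n f \<Longrightarrow> smn U n g"
proof (induction n arbitrary: f g)
  case 0 then show ?case using diff_on_cong[of f g] by simp
next
  case (Suc n)
  have "smn U n (partial j g)" for j
  proof (rule Suc.IH[of "partial j f" "partial j g"])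
    show "partial j f y = partial j g y" if "y \<in> U" for y
      using partial_local[OF opn that] Suc.prems(1) by blast
    show "smn U n (partial j f)" using Suc.prems(2) by simp
  qed
  moreover have "g differentiable_on U" using Suc.prems diff_on_cong[of f g] by simp
  ultimately show ?case by simp
qed

lemma smn_add: "smn U n f \<Longrightarrow> smn U n g \<Longrightarrow> smn U n (\<lambda>z. f z + g z)"
proof (induction n arbitrary: f g)
  case 0 then show ?case by (auto intro!: derivative_intros)
next
  case (Suc n)
  have "smn U n (partial j (\<lambda>z. f z + g z))" for j
  proof (rule smn_cong)
    show "smn U n (\<lambda>z. partial j f z + partial j g z)" using Suc by auto
    fix y assume "y \<in> U"
    then have "f differentiable at y" "g differentiable at y"
      using diff_on_at smn_diff_on Suc.prems by blast+
    then show "partial j f y + partial j g y = partial j (\<lambda>z. f z + g z) y"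
      by (simp add: partial_add)
  qed
  then show ?case using Suc.prems by (auto intro!: derivative_intros)
qed

lemma smn_mult: "smn U n f \<Longrightarrow> smn U n g \<Longrightarrow> smn U n (\<lambda>z. f z * g z)"
proof (induction n arbitrary: f g)
  case 0 then show ?case by (auto intro!: derivative_intros)
next
  case (Suc n)
  have "smn U n (partial j (\<lambda>z. f z * g z))" for j
  proof (rule smn_cong)
    have "smn U n f" "smn U n g" using Suc.prems smn_mono by blast+
    moreover have "smn U n (partial j f)" "smn U n (partial j g)" using Suc.prems by auto
    ultimately show "smn U n (\<lambda>z. partial j f z * g z + f z * partial j g z)"
      using Suc.IH by (intro smn_add) auto
    fix y assume "y \<in> U"
    then have "f differentiable at y" "g differentiable at y"
      using diff_on_at smn_diff_on Suc.prems by blast+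
    then show "partial j f y * g y + f y * partial j g y = partial j (\<lambda>z. f z * g z) y"
      by (simp add: partial_mult)
  qed
  moreover have "(\<lambda>z. f z * g z) differentiable_on U"
    using Suc.prems by (intro differentiable_on_mult) auto
  ultimately show ?case by (simp only: smn.simps) blast
qed


lemma sm_partial: "smooth_on U f \<Longrightarrow> smooth_on U (partial j f)"
  unfolding smooth_smn by (metis smn.simps(2))

lemma sm_diff: "smooth_on U f \<Longrightarrow> y \<in> U \<Longrightarrow> f differentiable at y"
  unfolding smooth_smn using smn_diff_on diff_on_at by blast

lemma sm_cong: "(\<And>y. y \<in> U \<Longrightarrow> f y = g y) \<Longrightarrow> smooth_on U f \<Longrightarrow> smooth_on U g"
  unfolding smooth_smn using smn_cong by blast

lemma sm_add: "smooth_on U f \<Longrightarrow> smooth_on U g \<Longrightarrow> smooth_on U (\<lambda>z. f z + g z)"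
  unfolding smooth_smn using smn_add by blast

lemma sm_mult: "smooth_on U f \<Longrightarrow> smooth_on U g \<Longrightarrow> smooth_on U (\<lambda>z. f z * g z)"
  unfolding smooth_smn using smn_mult by blast

lemma sm_const: "smooth_on U (\<lambda>z. c)"
  unfolding smooth_smn using smn_const by blast

lemma sm_coord: "smooth_on U (\<lambda>z. z $ j)"
  unfolding smooth_smn using smn_coord by blast

lemma sm_cmult: "smooth_on U f \<Longrightarrow> smooth_on U (\<lambda>z. c * f z)"
  using sm_mult[OF sm_const] by blast

lemma sm_sum: "finite S \<Longrightarrow> (\<And>j. j \<in> S \<Longrightarrow> smooth_on U (F j)) \<Longrightarrow> smooth_on U (\<lambda>z. \<Sum>j\<in>S. F j z)"
proof (induction S rule: finite_induct)
  case empty then show ?case using sm_const by simp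
next
  case (insert a S)
  then show ?case using sm_add[of "F a" "\<lambda>z. \<Sum>j\<in>S. F j z"] by simp
qed

lemma lap_fun: "laplacian f = (\<lambda>x. \<Sum>i\<in>UNIV. partial i (partial i f) x)"
  by (simp add: fun_eq_iff laplacian_def)

lemma sm_lap: "smooth_on U f \<Longrightarrow> smooth_on U (laplacian f)"
  unfolding lap_fun by (intro sm_sum sm_partial) auto

lemma sm_lapk: "smooth_on U f \<Longrightarrow> smooth_on U ((laplacian ^^ k) f)"
  by (induction k) (auto intro: sm_lap)

lemma w_fun: "(\<lambda>z::real^'n. (1 + norm z ^ 2) / 2) = (\<lambda>z. 1/2 * (1 + (\<Sum>j\<in>UNIV. z $ j * z $ j)))"
  by (simp add: fun_eq_iff power2_norm_eq_inner inner_vec_def)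

lemma sm_w: "smooth_on U (\<lambda>z::real^'n. (1 + norm z ^ 2) / 2)"
  unfolding w_fun by (intro sm_cmult sm_add sm_const sm_sum sm_mult sm_coord) auto

lemma sm_wpow: "smooth_on U (\<lambda>z::real^'n. ((1 + norm z ^ 2) / 2) ^ k)"
proof (induction k)
  case 0 then show ?case using sm_const by simp
next
  case (Suc k) then show ?case using sm_mult[OF sm_w Suc] by simp
qed

end

lemma w_has_derivative:
  "((\<lambda>z::real^'n::finite. ((1 + norm z ^ 2) / 2) ^ k) has_derivative
     (\<lambda>h. real k * ((1 + norm y ^ 2) / 2) ^ (k - 1) * (y \<bullet> h))) (at y)"
proof -
  have e: "(\<lambda>z::real^'n. ((1 + norm z ^ 2) / 2) ^ k) = (\<lambda>z. ((1 + z \<bullet> z) / 2) ^ k)"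
    by (simp add: power2_norm_eq_inner)
  have "((\<lambda>z::real^'n. ((1 + z \<bullet> z) / 2) ^ k) has_derivative
     (\<lambda>h. real k * ((1 + y \<bullet> y) / 2) ^ (k - 1) * (y \<bullet> h))) (at y)"
  proof -
    have "((\<lambda>z::real^'n. (1 + z \<bullet> z) / 2) has_derivative (\<lambda>h. y \<bullet> h)) (at y)"
      by (auto intro!: derivative_eq_intros simp: inner_commute)
    from has_derivative_power[OF this, of k] show ?thesis
      by (simp add: mult_ac)
  qed
  then show ?thesis unfolding e by (simp add: power2_norm_eq_inner)
qed

lemma partial_wpow:
  "partial i (\<lambda>z::real^'n::finite. ((1 + norm z ^ 2) / 2) ^ k) y
     = real k * ((1 + norm y ^ 2) / 2) ^ (k - 1) * y $ i"
  using partial_eq[OF w_has_derivative] by (simp add: inner_axis)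

lemma partial_w:
  "partial i (\<lambda>z::real^'n::finite. (1 + norm z ^ 2) / 2) y = y $ i"
  using partial_wpow[of i 1 y] by simp

lemma w_diff: "(\<lambda>z::real^'n::finite. ((1 + norm z ^ 2) / 2) ^ k) differentiable at y"
  using w_has_derivative unfolding differentiable_def by blast

lemma w_diff1: "(\<lambda>z::real^'n::finite. (1 + norm z ^ 2) / 2) differentiable at y"
  using w_diff[of 1] by simp

lemma coord_diff: "(\<lambda>z::real^'n::finite. z $ j) differentiable at y"
  by (rule bounded_linear_imp_differentiable) (rule bounded_linear_vec_nth)


lemma clairaut_est:
  fixes f :: "real^'n::finite \<Rightarrow> real"
  assumes r: "r > 0" and fd: "\<And>y. norm (y - x) < r \<Longrightarrow> f differentiable at y"
    and D: "(partial i f has_derivative D) (at x)" and e: "e > 0"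
  shows "\<exists>d>0. \<forall>h. 0 < h \<and> h < d \<longrightarrow>
     \<bar>(f (x + h *\<^sub>R axis i 1 + h *\<^sub>R axis j 1) - f (x + h *\<^sub>R axis i 1) - f (x + h *\<^sub>R axis j 1) + f x)
        - h\<^sup>2 * D (axis j 1)\<bar> \<le> 3 * e * h\<^sup>2"
proof -
  let ?a = "axis i 1 :: real^'n" and ?b = "axis j 1 :: real^'n"
  have bl: "bounded_linear D" and "\<forall>e>0. \<exists>d>0. \<forall>y. norm (y - x) < d \<longrightarrow>
      norm (partial i f y - partial i f x - D (y - x)) \<le> e * norm (y - x)"
    using D unfolding has_derivative_at_alt by auto
  then obtain d0 where d0: "d0 > 0" and
    est: "\<And>y. norm (y - x) < d0 \<Longrightarrow> \<bar>partial i f y - partial i f x - D (y - x)\<bar> \<le> e * norm (y - x)"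
    using e by (metis real_norm_def)
  define d where "d = min (r/2) (d0/2)"
  have "d > 0" using r d0 by (simp add: d_def)
  moreover have "\<bar>(f (x + h *\<^sub>R ?a + h *\<^sub>R ?b) - f (x + h *\<^sub>R ?a) - f (x + h *\<^sub>R ?b) + f x)
        - h\<^sup>2 * D ?b\<bar> \<le> 3 * e * h\<^sup>2" if h: "0 < h" "h < d" for h
  proof -
    define g where "g t = f ((x + h *\<^sub>R ?b) + t *\<^sub>R ?a) - f (x + t *\<^sub>R ?a)" for t
    define g' where "g' t = partial i f ((x + h *\<^sub>R ?b) + t *\<^sub>R ?a) - partial i f (x + t *\<^sub>R ?a)" for t
    have "DERIV g t :> g' t" if t: "0 \<le> t" "t \<le> h" for t
    proof -
      have n1: "norm ((x + h *\<^sub>R ?b + t *\<^sub>R ?a) - x) < r"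
      proof -
        have "norm ((x + h *\<^sub>R ?b + t *\<^sub>R ?a) - x) = norm (h *\<^sub>R ?b + t *\<^sub>R ?a)" by simp
        also have "\<dots> \<le> norm (h *\<^sub>R ?b) + norm (t *\<^sub>R ?a)" by (rule norm_triangle_ineq)
        also have "\<dots> = h + t" using h t by simp
        finally show ?thesis using h t by (simp add: d_def)
      qed
      have n2: "norm ((x + t *\<^sub>R ?a) - x) < r" using h t by (simp add: d_def)
      show ?thesis unfolding g_def g'_def
        by (intro DERIV_diff partial_line fd n1 n2)
    qed
    from MVT2[OF h(1) this] obtain \<xi> where xi: "0 < \<xi>" "\<xi> < h" and mv: "g h - g 0 = (h - 0) * g' \<xi>"
      by blast
    have gh: "g h - g 0 = f (x + h *\<^sub>R ?a + h *\<^sub>R ?b) - f (x + h *\<^sub>R ?a) - f (x + h *\<^sub>R ?b) + f x"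
      by (simp add: g_def add_ac)
    let ?p = "h *\<^sub>R ?b + \<xi> *\<^sub>R ?a" and ?q = "\<xi> *\<^sub>R ?a"
    have np: "norm ?p \<le> 2 * h"
    proof -
      have "norm ?p \<le> norm (h *\<^sub>R ?b) + norm (\<xi> *\<^sub>R ?a)" by (rule norm_triangle_ineq)
      also have "\<dots> = h + \<xi>" using h xi by simp
      finally show ?thesis using xi by simp
    qed
    have nq: "norm ?q = \<xi>" using xi by simp
    have e1: "\<bar>partial i f (x + ?p) - partial i f x - D ?p\<bar> \<le> e * (2 * h)"
    proof -
      have "\<bar>partial i f (x + ?p) - partial i f x - D ((x + ?p) - x)\<bar> \<le> e * norm ((x + ?p) - x)"
        by (rule est) (use np h in \<open>simp add: d_def\<close>)
      also have "\<dots> \<le> e * (2 * h)" using np e by (intro mult_left_mono) auto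
      finally show ?thesis by simp
    qed
    have e2: "\<bar>partial i f (x + ?q) - partial i f x - D ?q\<bar> \<le> e * h"
    proof -
      have "\<bar>partial i f (x + ?q) - partial i f x - D ((x + ?q) - x)\<bar> \<le> e * norm ((x + ?q) - x)"
        by (rule est) (use nq xi h in \<open>simp add: d_def\<close>)
      also have "\<dots> \<le> e * h" using nq xi e by (intro mult_left_mono) auto
      finally show ?thesis by simp
    qed
    have lin: "D ?p = h * D ?b + D ?q"
      using bl by (simp add: linear_add[OF bounded_linear.linear[OF bl]] linear_cmul[OF bounded_linear.linear[OF bl]])
    have g'x: "g' \<xi> = partial i f (x + ?p) - partial i f (x + ?q)"
      by (simp add: g'_def add_ac)
    have "\<bar>g' \<xi> - h * D ?b\<bar> \<le> 3 * e * h"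
      using e1 e2 lin g'x by (simp add: abs_le_iff)
    then have "\<bar>h * (g' \<xi> - h * D ?b)\<bar> \<le> h * (3 * e * h)"
      using h by (simp add: abs_mult)
    then show ?thesis using mv gh by (simp add: power2_eq_square algebra_simps)
  qed
  ultimately show ?thesis by blast
qed

lemma clairaut:
  fixes f :: "real^'n::finite \<Rightarrow> real"
  assumes U: "open U" "x \<in> U" and fd: "\<And>y. y \<in> U \<Longrightarrow> f differentiable at y"
    and di: "partial i f differentiable at x" and dj: "partial j f differentiable at x"
  shows "partial j (partial i f) x = partial i (partial j f) x"
proof -
  obtain r where r: "r > 0" "ball x r \<subseteq> U" using U open_contains_ball by blast
  have fd': "\<And>y. norm (y - x) < r \<Longrightarrow> f differentiable at y"
    using r fd by (metis dist_commute dist_norm mem_ball subsetD)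
  obtain D1 where D1: "(partial i f has_derivative D1) (at x)" using di unfolding differentiable_def by blast
  obtain D2 where D2: "(partial j f has_derivative D2) (at x)" using dj unfolding differentiable_def by blast
  have p1: "partial j (partial i f) x = D1 (axis j 1)" by (rule partial_eq[OF D1])
  have p2: "partial i (partial j f) x = D2 (axis i 1)" by (rule partial_eq[OF D2])
  have bnd: "\<bar>D1 (axis j 1) - D2 (axis i 1)\<bar> \<le> 6 * e" if e: "e > 0" for e
  proof -
    obtain d1 where d1: "d1 > 0" and h1: "\<And>h. 0 < h \<Longrightarrow> h < d1 \<Longrightarrow>
     \<bar>(f (x + h *\<^sub>R axis i 1 + h *\<^sub>R axis j 1) - f (x + h *\<^sub>R axis i 1) - f (x + h *\<^sub>R axis j 1) + f x)
        - h\<^sup>2 * D1 (axis j 1)\<bar> \<le> 3 * e * h\<^sup>2"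
      using clairaut_est[OF r(1) fd' D1 e, of j] by blast
    obtain d2 where d2: "d2 > 0" and h2: "\<And>h. 0 < h \<Longrightarrow> h < d2 \<Longrightarrow>
     \<bar>(f (x + h *\<^sub>R axis j 1 + h *\<^sub>R axis i 1) - f (x + h *\<^sub>R axis j 1) - f (x + h *\<^sub>R axis i 1) + f x)
        - h\<^sup>2 * D2 (axis i 1)\<bar> \<le> 3 * e * h\<^sup>2"
      using clairaut_est[OF r(1) fd' D2 e, of i] by blast
    define h where "h = min d1 d2 / 2"
    have h: "0 < h" "h < d1" "h < d2" using d1 d2 by (auto simp: h_def)
    have A: "\<bar>(f (x + h *\<^sub>R axis i 1 + h *\<^sub>R axis j 1) - f (x + h *\<^sub>R axis i 1) - f (x + h *\<^sub>R axis j 1) + f x)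
        - h\<^sup>2 * D1 (axis j 1)\<bar> \<le> 3 * e * h\<^sup>2" using h1 h by blast
    have B: "\<bar>(f (x + h *\<^sub>R axis i 1 + h *\<^sub>R axis j 1) - f (x + h *\<^sub>R axis i 1) - f (x + h *\<^sub>R axis j 1) + f x)
        - h\<^sup>2 * D2 (axis i 1)\<bar> \<le> 3 * e * h\<^sup>2" using h2[OF h(1) h(3)] by (simp add: add_ac)
    have "\<bar>h\<^sup>2 * (D1 (axis j 1) - D2 (axis i 1))\<bar> \<le> h\<^sup>2 * (6 * e)"
      using A B by (simp add: abs_le_iff algebra_simps)
    then show ?thesis using h by (simp add: abs_mult)
  qed
  have "D1 (axis j 1) = D2 (axis i 1)"
  proof (rule ccontr)
    assume ne: "D1 (axis j 1) \<noteq> D2 (axis i 1)"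
    let ?a = "\<bar>D1 (axis j 1) - D2 (axis i 1)\<bar>"
    have "?a > 0" using ne by simp
    then have "?a \<le> 6 * (?a / 12)" using bnd[of "?a / 12"] by simp
    then show False using \<open>?a > 0\<close> by simp
  qed
  then show ?thesis using p1 p2 by simp
qed


abbreviation ww :: "real^'n::finite \<Rightarrow> real" where "ww z \<equiv> (1 + norm z ^ 2) / 2"

definition euler :: "(real^'n::finite \<Rightarrow> real) \<Rightarrow> real^'n \<Rightarrow> real" where
  "euler g z = (\<Sum>j\<in>UNIV. z $ j * partial j g z)"

lemma euler_fun: "euler g = (\<lambda>z. \<Sum>j\<in>UNIV. z $ j * partial j g z)"
  by (simp add: fun_eq_iff euler_def)

context
  fixes U :: "(real^'n::finite) set"
  assumes opn: "open U"
begin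

lemma sm_euler: "smooth_on U g \<Longrightarrow> smooth_on U (euler g)"
  unfolding euler_fun by (intro sm_sum sm_mult sm_coord sm_partial opn) auto

lemma lap_local: "(\<And>z. z \<in> U \<Longrightarrow> f z = g z) \<Longrightarrow> y \<in> U \<Longrightarrow> laplacian f y = laplacian g y"
  unfolding laplacian_def
  by (intro sum.cong refl partial_local[OF opn]) auto

lemma lap_add: "smooth_on U f \<Longrightarrow> smooth_on U g \<Longrightarrow> y \<in> U \<Longrightarrow>
   laplacian (\<lambda>z. f z + g z) y = laplacian f y + laplacian g y"
proof -
  assume f: "smooth_on U f" and g: "smooth_on U g" and y: "y \<in> U"
  have "partial i (partial i (\<lambda>z. f z + g z)) y = partial i (partial i f) y + partial i (partial i g) y" for i
  proof -
    have "partial i (partial i (\<lambda>z. f z + g z)) y = partial i (\<lambda>z. partial i f z + partial i g z) y"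
      by (rule partial_local[OF opn y]) (intro partial_add sm_diff[OF opn] f g; assumption)
    also have "\<dots> = partial i (partial i f) y + partial i (partial i g) y"
      by (intro partial_add sm_diff[OF opn] sm_partial[OF opn] f g y)
    finally show ?thesis .
  qed
  then show ?thesis unfolding laplacian_def by (simp add: sum.distrib)
qed

lemma lap_cmult: "smooth_on U f \<Longrightarrow> y \<in> U \<Longrightarrow>
   laplacian (\<lambda>z. c * f z) y = c * laplacian f y"
proof -
  assume f: "smooth_on U f" and y: "y \<in> U"
  have "partial i (partial i (\<lambda>z. c * f z)) y = c * partial i (partial i f) y" for i
  proof -
    have "partial i (partial i (\<lambda>z. c * f z)) y = partial i (\<lambda>z. c * partial i f z) y"
      by (rule partial_local[OF opn y]) (intro partial_cmult sm_diff[OF opn] f; assumption)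
    also have "\<dots> = c * partial i (partial i f) y"
      by (intro partial_cmult sm_diff[OF opn] sm_partial[OF opn] f y)
    finally show ?thesis .
  qed
  then show ?thesis unfolding laplacian_def by (simp add: sum_distrib_left)
qed

lemma lap_mult: "smooth_on U f \<Longrightarrow> smooth_on U g \<Longrightarrow> y \<in> U \<Longrightarrow>
   laplacian (\<lambda>z. f z * g z) y = f y * laplacian g y + 2 * (\<Sum>i\<in>UNIV. partial i f y * partial i g y)
     + g y * laplacian f y"
proof -
  assume f: "smooth_on U f" and g: "smooth_on U g" and y: "y \<in> U"
  note D = sm_diff[OF opn] sm_partial[OF opn]
  have "partial i (partial i (\<lambda>z. f z * g z)) y = f y * partial i (partial i g) y
     + 2 * (partial i f y * partial i g y) + g y * partial i (partial i f) y" for i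
  proof -
    have "partial i (partial i (\<lambda>z. f z * g z)) y
        = partial i (\<lambda>z. partial i f z * g z + f z * partial i g z) y"
      by (rule partial_local[OF opn y]) (intro partial_mult D f g; assumption)
    also have "\<dots> = partial i (\<lambda>z. partial i f z * g z) y + partial i (\<lambda>z. f z * partial i g z) y"
      by (intro partial_add differentiable_mult D f g y)
    also have "\<dots> = (partial i (partial i f) y * g y + partial i f y * partial i g y)
        + (partial i f y * partial i g y + f y * partial i (partial i g) y)"
      by (simp add: partial_mult D f g y)
    finally show ?thesis by simp
  qed
  then show ?thesis unfolding laplacian_def
    by (simp add: sum.distrib sum_distrib_left sum_distrib_right mult.commute)
qed

lemma lap_w_mult: "smooth_on U g \<Longrightarrow> y \<in> U \<Longrightarrow>
   laplacian (\<lambda>z. ww z * g z) y = ww y * laplacian g y + 2 * euler g y + real CARD('n) * g y"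
proof -
  assume g: "smooth_on U g" and y: "y \<in> U"
  note D = sm_diff[OF opn] sm_partial[OF opn]
  have pi: "partial i (partial i (\<lambda>z. ww z * g z)) y = g y + 2 * (y $ i * partial i g y) + ww y * partial i (partial i g) y" for i
  proof -
    have "partial i (partial i (\<lambda>z. ww z * g z)) y
        = partial i (\<lambda>z. z $ i * g z + ww z * partial i g z) y"
    proof (rule partial_local[OF opn y])
      fix z assume z: "z \<in> U"
      have "partial i (\<lambda>z. ww z * g z) z = partial i ww z * g z + ww z * partial i g z"
        by (rule partial_mult[OF w_diff1 D(1)[OF g z]])
      also have "partial i ww z = z $ i" by (rule partial_w)
      finally show "partial i (\<lambda>z. ww z * g z) z = z $ i * g z + ww z * partial i g z" .
    qed
    also have "\<dots> = partial i (\<lambda>z. z $ i * g z) y + partial i (\<lambda>z. ww z * partial i g z) y"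
      by (intro partial_add differentiable_mult D g y coord_diff w_diff1)
    also have "\<dots> = (1 * g y + y $ i * partial i g y) + (y $ i * partial i g y + ww y * partial i (partial i g) y)"
      using partial_mult[OF coord_diff D(1)[OF g y], of i i] partial_mult[OF w_diff1 D(1)[OF D(2)[OF g] y], of i]
      by (simp add: partial_coord_fun partial_w)
    finally show ?thesis by simp
  qed
  have "laplacian (\<lambda>z. ww z * g z) y = (\<Sum>i\<in>UNIV. g y + 2 * (y $ i * partial i g y) + ww y * partial i (partial i g) y)"
    unfolding laplacian_def using pi by (intro sum.cong) auto
  also have "\<dots> = real CARD('n) * g y + 2 * euler g y + ww y * laplacian g y"
    unfolding laplacian_def euler_def by (simp only: sum.distrib sum_distrib_left[symmetric] sum_constant)
  finally show ?thesis by simp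
qed

end


lemma delta_sum: "(\<Sum>j\<in>(UNIV::'n::finite set). (if j = i then 1 else 0) * (X j::real)) = X i"
proof -
  have "(\<lambda>j. (if j = i then 1 else 0) * X j) = (\<lambda>j. if j = i then X j else 0)" by auto
  then show ?thesis by (simp only: sum.delta[OF finite] if_True UNIV_I)
qed

context
  fixes U :: "(real^'n::finite) set"
  assumes opn: "open U"
begin

lemma partial_euler: "smooth_on U g \<Longrightarrow> z \<in> U \<Longrightarrow>
   partial i (euler g) z = partial i g z + (\<Sum>j\<in>UNIV. z $ j * partial i (partial j g) z)"
proof -
  assume g: "smooth_on U g" and z: "z \<in> U"
  note D = sm_diff[OF opn] sm_partial[OF opn]
  have "partial i (euler g) z = (\<Sum>j\<in>UNIV. partial i (\<lambda>z. z $ j * partial j g z) z)"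
    unfolding euler_fun by (intro partial_sum differentiable_mult coord_diff D g z) auto
  also have "\<dots> = (\<Sum>j\<in>UNIV. (if j = i then 1 else 0) * partial j g z + z $ j * partial i (partial j g) z)"
  proof (intro sum.cong refl)
    fix j
    show "partial i (\<lambda>z. z $ j * partial j g z) z = (if j = i then 1 else 0) * partial j g z + z $ j * partial i (partial j g) z"
      using partial_mult[OF coord_diff D(1)[OF D(2)[OF g] z], of i j j] by (simp add: partial_coord_fun)
  qed
  also have "\<dots> = partial i g z + (\<Sum>j\<in>UNIV. z $ j * partial i (partial j g) z)"
    by (simp only: sum.distrib delta_sum)
  finally show ?thesis .
qed

lemma sm_clairaut: "smooth_on U g \<Longrightarrow> z \<in> U \<Longrightarrow> partial j (partial i g) z = partial i (partial j g) z"
  by (rule clairaut[OF opn]) (auto intro: sm_diff[OF opn] sm_partial[OF opn])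

lemma lap_euler: "smooth_on U g \<Longrightarrow> y \<in> U \<Longrightarrow>
   laplacian (euler g) y = euler (laplacian g) y + 2 * laplacian g y"
proof -
  assume g: "smooth_on U g" and y: "y \<in> U"
  note D = sm_diff[OF opn] sm_partial[OF opn]
  have pi: "partial i (partial i (euler g)) y = 2 * partial i (partial i g) y
       + (\<Sum>j\<in>UNIV. y $ j * partial j (partial i (partial i g)) y)" for i
  proof -
    have e0: "partial i (partial i (euler g)) y
        = partial i (\<lambda>z. partial i g z + (\<Sum>j\<in>UNIV. z $ j * partial i (partial j g) z)) y"
      by (rule partial_local[OF opn y]) (rule partial_euler[OF g])
    have dj: "(\<lambda>z. z $ j * partial i (partial j g) z) differentiable at y" for j
      by (intro differentiable_mult coord_diff D g y)
    have "partial i (\<lambda>z. partial i g z + (\<Sum>j\<in>UNIV. z $ j * partial i (partial j g) z)) y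
        = partial i (partial i g) y + partial i (\<lambda>z. \<Sum>j\<in>UNIV. z $ j * partial i (partial j g) z) y"
      by (rule partial_add) (use dj D g y in auto)
    also have "partial i (\<lambda>z. \<Sum>j\<in>UNIV. z $ j * partial i (partial j g) z) y
        = (\<Sum>j\<in>UNIV. partial i (\<lambda>z. z $ j * partial i (partial j g) z) y)"
      by (rule partial_sum) (use dj in auto)
    also have "\<dots> = (\<Sum>j\<in>UNIV. (if j = i then 1 else 0) * partial i (partial j g) y
         + y $ j * partial j (partial i (partial i g)) y)"
    proof (intro sum.cong refl)
      fix j
      have "partial i (\<lambda>z. z $ j * partial i (partial j g) z) y
          = (if j = i then 1 else 0) * partial i (partial j g) y + y $ j * partial i (partial i (partial j g)) y"
        using partial_mult[OF coord_diff D(1)[OF D(2)[OF D(2)[OF g]] y], of i j] by (simp add: partial_coord_fun)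
      also have "partial i (partial i (partial j g)) y = partial i (partial j (partial i g)) y"
        by (rule partial_local[OF opn y]) (rule sm_clairaut[OF g, symmetric])
      also have "\<dots> = partial j (partial i (partial i g)) y"
        by (rule sm_clairaut[OF D(2)[OF g] y, symmetric])
      finally show "partial i (\<lambda>z. z $ j * partial i (partial j g) z) y
          = (if j = i then 1 else 0) * partial i (partial j g) y + y $ j * partial j (partial i (partial i g)) y" .
    qed
    also have "\<dots> = partial i (partial i g) y + (\<Sum>j\<in>UNIV. y $ j * partial j (partial i (partial i g)) y)"
      by (simp only: sum.distrib delta_sum)
    finally show ?thesis using e0 by simp
  qed
  have pl: "partial j (laplacian g) y = (\<Sum>i\<in>UNIV. partial j (partial i (partial i g)) y)" for j
  proof -
    have "partial j (laplacian g) y = partial j (\<lambda>x. \<Sum>i\<in>UNIV. partial i (partial i g) x) y"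
      by (simp only: lap_fun[OF opn])
    also have "\<dots> = (\<Sum>i\<in>UNIV. partial j (partial i (partial i g)) y)"
      by (rule partial_sum) (use D g y in auto)
    finally show ?thesis .
  qed
  have "laplacian (euler g) y = (\<Sum>i\<in>UNIV. 2 * partial i (partial i g) y
       + (\<Sum>j\<in>UNIV. y $ j * partial j (partial i (partial i g)) y))"
    unfolding laplacian_def using pi by (intro sum.cong) auto
  also have "\<dots> = 2 * laplacian g y + (\<Sum>j\<in>UNIV. y $ j * (\<Sum>i\<in>UNIV. partial j (partial i (partial i g)) y))"
    unfolding laplacian_def by (simp only: sum.distrib sum_distrib_left[symmetric] sum.swap[of _ UNIV UNIV])
  also have "\<dots> = 2 * laplacian g y + euler (laplacian g) y"
    unfolding euler_def pl ..
  finally show ?thesis by simp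
qed

end


lemma partial_wpow_fun:
  "partial i (\<lambda>z::real^'n::finite. ww z ^ (m + 1)) = (\<lambda>z. real (m + 1) * ww z ^ m * z $ i)"
proof (rule ext)
  fix z :: "real^'n"
  show "partial i (\<lambda>z::real^'n::finite. ww z ^ (m + 1)) z = real (m + 1) * ww z ^ m * z $ i"
    using partial_wpow[of i "m + 1" z] by (simp only: add_diff_cancel_right')
qed

lemma lap_wpow:
  "laplacian (\<lambda>z::real^'n::finite. ww z ^ (m + 1)) y
     = real (m + 1) * (real m * ww y ^ (m - 1) * norm y ^ 2 + real CARD('n) * ww y ^ m)"
proof -
  have pi: "partial i (partial i (\<lambda>z::real^'n::finite. ww z ^ (m + 1))) y
      = real (m + 1) * (real m * ww y ^ (m - 1) * (y $ i * y $ i) + ww y ^ m)" for i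
  proof -
    have d: "(\<lambda>z::real^'n. real (m + 1) * ww z ^ m) differentiable at y"
      by (intro differentiable_mult differentiable_const w_diff)
    have "partial i (partial i (\<lambda>z::real^'n::finite. ww z ^ (m + 1))) y
        = partial i (\<lambda>z. real (m + 1) * ww z ^ m * z $ i) y"
      by (simp only: partial_wpow_fun)
    also have "\<dots> = partial i (\<lambda>z. real (m + 1) * ww z ^ m) y * y $ i + real (m + 1) * ww y ^ m * partial i (\<lambda>z. z $ i) y"
      by (rule partial_mult[OF d coord_diff])
    also have "partial i (\<lambda>z. real (m + 1) * ww z ^ m) y = real (m + 1) * partial i (\<lambda>z. ww z ^ m) y"
      by (rule partial_cmult[OF w_diff])
    finally show ?thesis by (simp add: partial_wpow partial_coord_fun algebra_simps del: of_nat_Suc)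
  qed
  have nn: "(\<Sum>i\<in>UNIV. y $ i * y $ i) = norm y ^ 2"
    by (simp add: power2_norm_eq_inner inner_vec_def)
  have "laplacian (\<lambda>z::real^'n::finite. ww z ^ (m + 1)) y
      = (\<Sum>i\<in>UNIV. real (m + 1) * (real m * ww y ^ (m - 1) * (y $ i * y $ i) + ww y ^ m))"
    unfolding laplacian_def using pi by (intro sum.cong) auto
  also have "\<dots> = real (m + 1) * (real m * ww y ^ (m - 1) * (\<Sum>i\<in>UNIV. y $ i * y $ i) + real CARD('n) * ww y ^ m)"
    by (simp only: sum_distrib_left[symmetric] sum.distrib sum_constant)
  finally show ?thesis unfolding nn .
qed

lemma alg_key:
  fixes W N :: real
  assumes "W = (1 + N) / 2" "W > 0"
  shows "real m * W ^ (m - 1) * N + real m * W powi (int m - 1) = 2 * real m * W ^ m"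
proof (cases m)
  case 0 then show ?thesis by simp
next
  case (Suc k)
  have "W powi (int m - 1) = W ^ k" using Suc by (simp add: power_int_of_nat)
  then have "real m * W ^ (m - 1) * N + real m * W powi (int m - 1) = real m * W ^ k * (N + 1)"
    using Suc by (simp add: algebra_simps)
  also have "N + 1 = 2 * W" using assms by simp
  finally show ?thesis using Suc by (simp add: algebra_simps)
qed

context
  fixes U :: "(real^'n::finite) set"
  assumes opn: "open U"
begin

lemma lapk_w: "smooth_on U g \<Longrightarrow> y \<in> U \<Longrightarrow>
  (laplacian ^^ Suc k) (\<lambda>z. ww z * g z) y = ww y * (laplacian ^^ Suc k) g y
    + real (k + 1) * (2 * euler ((laplacian ^^ k) g) y + (real CARD('n) + 2 * real k) * (laplacian ^^ k) g y)"
proof (induction k arbitrary: y)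
  case 0
  then show ?case using lap_w_mult[OF opn, of g y] by simp
next
  case (Suc k)
  define L0 where "L0 = (laplacian ^^ k) g"
  define L1 where "L1 = (laplacian ^^ Suc k) g"
  have L1: "L1 = laplacian L0" by (simp add: L0_def L1_def)
  have s0: "smooth_on U L0" unfolding L0_def by (rule sm_lapk[OF opn Suc.prems(1)])
  have s1: "smooth_on U L1" unfolding L1_def by (rule sm_lapk[OF opn Suc.prems(1)])
  define c1 :: real where "c1 = real (k + 1)"
  define c2 :: real where "c2 = real CARD('n) + 2 * real k"
  have "(laplacian ^^ Suc (Suc k)) (\<lambda>z. ww z * g z) y = laplacian ((laplacian ^^ Suc k) (\<lambda>z. ww z * g z)) y"
    by simp
  also have "\<dots> = laplacian (\<lambda>z. ww z * L1 z + c1 * (2 * euler L0 z + c2 * L0 z)) y"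
    by (rule lap_local[OF opn _ Suc.prems(2)]) (use Suc.IH Suc.prems in \<open>simp add: L0_def L1_def c1_def c2_def\<close>)
  also have "\<dots> = laplacian (\<lambda>z. ww z * L1 z) y + laplacian (\<lambda>z. c1 * (2 * euler L0 z + c2 * L0 z)) y"
    by (intro lap_add[OF opn] sm_mult[OF opn] sm_w[OF opn] sm_cmult[OF opn] sm_add[OF opn] sm_euler[OF opn] s0 s1 Suc.prems(2))
  also have "laplacian (\<lambda>z. c1 * (2 * euler L0 z + c2 * L0 z)) y
      = c1 * (2 * laplacian (euler L0) y + c2 * laplacian L0 y)"
  proof -
    have a: "smooth_on U (\<lambda>z. 2 * euler L0 z)" "smooth_on U (\<lambda>z. c2 * L0 z)"
      by (intro sm_cmult[OF opn] sm_euler[OF opn] s0)+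
    have "laplacian (\<lambda>z. c1 * (2 * euler L0 z + c2 * L0 z)) y = c1 * laplacian (\<lambda>z. 2 * euler L0 z + c2 * L0 z) y"
      by (rule lap_cmult[OF opn sm_add[OF opn a] Suc.prems(2)])
    also have "laplacian (\<lambda>z. 2 * euler L0 z + c2 * L0 z) y = laplacian (\<lambda>z. 2 * euler L0 z) y + laplacian (\<lambda>z. c2 * L0 z) y"
      by (rule lap_add[OF opn a Suc.prems(2)])
    also have "laplacian (\<lambda>z. 2 * euler L0 z) y = 2 * laplacian (euler L0) y"
      by (rule lap_cmult[OF opn sm_euler[OF opn s0] Suc.prems(2)])
    also have "laplacian (\<lambda>z. c2 * L0 z) y = c2 * laplacian L0 y"
      by (rule lap_cmult[OF opn s0 Suc.prems(2)])
    finally show ?thesis .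
  qed
  also have "laplacian (\<lambda>z. ww z * L1 z) y = ww y * laplacian L1 y + 2 * euler L1 y + real CARD('n) * L1 y"
    by (rule lap_w_mult[OF opn s1 Suc.prems(2)])
  also have "laplacian (euler L0) y = euler (laplacian L0) y + 2 * laplacian L0 y"
    by (rule lap_euler[OF opn s0 Suc.prems(2)])
  finally have "(laplacian ^^ Suc (Suc k)) (\<lambda>z. ww z * g z) y =
     ww y * laplacian L1 y + 2 * euler L1 y + real CARD('n) * L1 y + c1 * (2 * (euler L1 y + 2 * L1 y) + c2 * L1 y)"
    unfolding L1 .
  moreover have "laplacian L1 y = (laplacian ^^ Suc (Suc k)) g y" by (simp add: L1_def)
  ultimately show ?case by (simp add: L1_def c1_def c2_def algebra_simps)
qed

end

theorem lemma2p1: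
  fixes u :: "real^'n \<Rightarrow> real" and U :: "(real^'n) set" and m :: nat
  assumes "open U" and "smooth_on U u" and "x \<in> U"
  shows "laplacian (\<lambda>y. ((1 + norm y ^ 2) / 2) ^ (m + 1) * (laplacian ^^ m) u y) x
         + real m * (real m + 1) * ((1 + norm x ^ 2) / 2) powi (int m - 1) * (laplacian ^^ m) u x
         = ((1 + norm x ^ 2) / 2) ^ m
           * (laplacian ^^ (m + 1)) (\<lambda>y. (1 + norm y ^ 2) / 2 * u y) x"
proof -
  note opn = assms(1) and x = assms(3)
  define v where "v = (laplacian ^^ m) u"
  have sv: "smooth_on U v" unfolding v_def by (rule sm_lapk[OF opn assms(2)])
  define W where "W = ww x"
  define N where "N = norm x ^ 2"
  have WN: "W = (1 + N) / 2" by (simp add: W_def N_def)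
  have Wpos: "W > 0" unfolding WN N_def by (simp add: add_pos_nonneg)
  define E where "E = euler v x"
  define L where "L = laplacian v x"
  have "laplacian (\<lambda>y. ww y ^ (m + 1) * v y) x
      = ww x ^ (m + 1) * laplacian v x + 2 * (\<Sum>i\<in>UNIV. partial i (\<lambda>z. ww z ^ (m + 1)) x * partial i v x)
        + v x * laplacian (\<lambda>z. ww z ^ (m + 1)) x"
    by (rule lap_mult[OF opn sm_wpow[OF opn] sv x])
  also have "(\<Sum>i\<in>UNIV. partial i (\<lambda>z. ww z ^ (m + 1)) x * partial i v x) = real (m + 1) * W ^ m * E"
    unfolding partial_wpow_fun E_def euler_def W_def
    by (simp add: sum_distrib_left sum_distrib_right mult_ac)
  also have "laplacian (\<lambda>z. ww z ^ (m + 1)) x = real (m + 1) * (real m * W ^ (m - 1) * N + real CARD('n) * W ^ m)"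
    unfolding W_def N_def by (rule lap_wpow)
  finally have lhs: "laplacian (\<lambda>y. ww y ^ (m + 1) * v y) x
     = W ^ (m + 1) * L + 2 * (real (m + 1) * W ^ m * E)
       + v x * (real (m + 1) * (real m * W ^ (m - 1) * N + real CARD('n) * W ^ m))"
    by (simp add: W_def L_def)
  have rhs: "(laplacian ^^ (m + 1)) (\<lambda>y. ww y * u y) x
     = W * L + real (m + 1) * (2 * E + (real CARD('n) + 2 * real m) * v x)"
    using lapk_w[OF opn assms(2) x, of m] by (simp add: W_def L_def E_def v_def)
  have key: "real m * W ^ (m - 1) * N + real m * W powi (int m - 1) = 2 * real m * W ^ m"
    by (rule alg_key[OF WN Wpos])
  have "laplacian (\<lambda>y. ww y ^ (m + 1) * v y) x + real m * (real m + 1) * W powi (int m - 1) * v x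
      = W ^ (m + 1) * L + 2 * (real (m + 1) * W ^ m * E)
       + v x * real (m + 1) * (real m * W ^ (m - 1) * N + real m * W powi (int m - 1)) + v x * real (m + 1) * real CARD('n) * W ^ m"
    unfolding lhs by (simp add: algebra_simps)
  also have "\<dots> = W ^ m * (W * L + real (m + 1) * (2 * E + (real CARD('n) + 2 * real m) * v x))"
    unfolding key by (simp add: algebra_simps)
  finally have F: "laplacian (\<lambda>y. ww y ^ (m + 1) * v y) x + real m * (real m + 1) * W powi (int m - 1) * v x
      = W ^ m * (W * L + real (m + 1) * (2 * E + (real CARD('n) + 2 * real m) * v x))" .
  have "laplacian (\<lambda>y. ww y ^ (m + 1) * v y) x + real m * (real m + 1) * W powi (int m - 1) * v x
      = W ^ m * (laplacian ^^ (m + 1)) (\<lambda>y. ww y * u y) x"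
    unfolding rhs by (rule F)
  then show ?thesis unfolding v_def W_def .
qed

end
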